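(* Let $0<r<1$ and let $A,B\in C_{1,r}$ be doubly commuting operators on a Hilbert space $\mathcal H$ (i.e. $AB=BA$ and $AB^*=B^*A$). Let $\mathcal H=\mathcal H_1\oplus\mathcal H_2$ be the canonical decomposition of $A$, where $\mathcal H_1$ is the maximal closed subspace reducing $A$ such that $A|_{\mathcal H_1}\in\mathcal C_{1,r}$ and $\mathcal H_2=\mathcal H\ominus\mathcal H_1$ (so $A|_{\mathcal H_2}$ is a c.n.u. $C_{1,r}$-contraction). Then $\mathcal H_1$ and $\mathcal H_2$ are reducing subspaces for $B$.
   Context: $C_{1,r}=\{T: T\text{ invertible},\ \|T\|\le1,\ \|rT^{-1}\|\le1\}$. $\mathcal C_{1,r}$ is the class of operators $J$ on a Hilbert space $\mathcal L$ for which there exist orthogonal projections $P_0,P_1$ on $\mathcal L$ with $P_0+P_1=I_{\mathcal L}$ and $J^*J=P_0+r^2P_1$. An operator $T\in C_{1,r}$ on $\mathcal H$ is a c.n.u. $C_{1,r}$-contraction if $\mathcal H$ has no non-zero closed subspace that reduces $T$ to an operator in $\mathcal C_{1,r}$. (Such a maximal reducing subspace $\mathcal H_1$ exists and the decomposition is unique.) *)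

theory Defs
  imports "HOL-Analysis.Analysis"
begin

class complex_vector = real_vector +
  fixes scaleC :: "complex \<Rightarrow> 'a \<Rightarrow> 'a" (infixr "*\<^sub>C" 75)
  assumes scaleC_add_right: "a *\<^sub>C (x + y) = a *\<^sub>C x + a *\<^sub>C y"
    and scaleC_add_left: "(a + b) *\<^sub>C x = a *\<^sub>C x + b *\<^sub>C x"
    and scaleC_scaleC: "a *\<^sub>C (b *\<^sub>C x) = (a * b) *\<^sub>C x"
    and scaleC_one: "1 *\<^sub>C x = x"
    and scaleR_scaleC: "r *\<^sub>R x = complex_of_real r *\<^sub>C x"

class complex_inner = complex_vector + real_normed_vector +
  fixes cinner :: "'a \<Rightarrow> 'a \<Rightarrow> complex"
  assumes cinner_commute: "cinner x y = cnj (cinner y x)"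
    and cinner_add_left: "cinner (x + y) z = cinner x z + cinner y z"
    and cinner_scaleC_left: "cinner (a *\<^sub>C x) y = cnj a * cinner x y"
    and cinner_self_real: "Im (cinner x x) = 0"
    and cinner_self_nonneg: "0 \<le> Re (cinner x x)"
    and cinner_self_eq_zero: "cinner x x = 0 \<longleftrightarrow> x = 0"
    and norm_eq_sqrt_cinner: "norm x = sqrt (Re (cinner x x))"

class chilbert_space = complex_inner + complete_space

definition bounded_clinear :: "('a::complex_inner \<Rightarrow> 'b::complex_inner) \<Rightarrow> bool" where
  "bounded_clinear T \<longleftrightarrow> bounded_linear T \<and> (\<forall>c x. T (c *\<^sub>C x) = c *\<^sub>C T x)"

definition cadjoint :: "('a::complex_inner \<Rightarrow> 'a) \<Rightarrow> ('a \<Rightarrow> 'a)" where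
  "cadjoint T = (SOME S. \<forall>x y. cinner (T x) y = cinner x (S y))"

definition invertible_op :: "('a::complex_inner \<Rightarrow> 'a) \<Rightarrow> bool" where
  "invertible_op T \<longleftrightarrow> bounded_clinear T \<and>
     (\<exists>S. bounded_clinear S \<and> (\<forall>x. S (T x) = x) \<and> (\<forall>x. T (S x) = x))"

definition C1r :: "real \<Rightarrow> ('a::complex_inner \<Rightarrow> 'a) \<Rightarrow> bool" where
  "C1r r T \<longleftrightarrow> invertible_op T \<and> onorm T \<le> 1 \<and> onorm (\<lambda>x. r *\<^sub>R inv T x) \<le> 1"

definition csubspace :: "'a::complex_vector set \<Rightarrow> bool" where
  "csubspace M \<longleftrightarrow> 0 \<in> M \<and> (\<forall>x\<in>M. \<forall>y\<in>M. x + y \<in> M) \<and> (\<forall>c. \<forall>x\<in>M. c *\<^sub>C x \<in> M)"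

definition closed_csubspace :: "'a::complex_inner set \<Rightarrow> bool" where
  "closed_csubspace M \<longleftrightarrow> csubspace M \<and> closed M"

definition orthogonal_complement :: "'a::complex_inner set \<Rightarrow> 'a set" where
  "orthogonal_complement M = {x. \<forall>y\<in>M. cinner y x = 0}"

definition reduces :: "('a::complex_inner \<Rightarrow> 'a) \<Rightarrow> 'a set \<Rightarrow> bool" where
  "reduces T M \<longleftrightarrow> closed_csubspace M \<and> T ` M \<subseteq> M \<and> cadjoint T ` M \<subseteq> M"

definition orth_proj_on :: "'a::complex_inner set \<Rightarrow> ('a \<Rightarrow> 'a) \<Rightarrow> bool" where
  "orth_proj_on M P \<longleftrightarrow> (\<forall>x\<in>M. P x \<in> M) \<and>
     (\<forall>x\<in>M. \<forall>y\<in>M. P (x + y) = P x + P y) \<and> (\<forall>c. \<forall>x\<in>M. P (c *\<^sub>C x) = c *\<^sub>C P x) \<and>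
     (\<forall>x\<in>M. P (P x) = P x) \<and> (\<forall>x\<in>M. \<forall>y\<in>M. cinner (P x) y = cinner x (P y))"

text \<open>The restriction \<open>J|M\<close> of J to the (J-reducing) closed subspace M lies in the
  class \<open>\<C>_{1,r}\<close>: there are orthogonal projections P0, P1 on M with P0 + P1 = I_M and
  \<open>(J|M)^*(J|M) = P0 + r^2 P1\<close>; the operator identity on M is written out via
  the defining property of the adjoint on M, i.e. \<open>\<langle>Jx, Jy\<rangle> = \<langle>x, (P0 + r^2 P1) y\<rangle>\<close>
  for x, y in M.\<close>
definition classC1r_on :: "real \<Rightarrow> 'a::complex_inner set \<Rightarrow> ('a \<Rightarrow> 'a) \<Rightarrow> bool" where
  "classC1r_on r M J \<longleftrightarrow> (\<exists>P0 P1. orth_proj_on M P0 \<and> orth_proj_on M P1 \<and>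
     (\<forall>x\<in>M. P0 x + P1 x = x) \<and>
     (\<forall>x\<in>M. \<forall>y\<in>M. cinner (J x) (J y) = cinner x (P0 y + complex_of_real (r\<^sup>2) *\<^sub>C P1 y)))"

end

theory Submission
  imports Defs
begin

lemma scaleC_zero_left[simp]: "(0::complex) *\<^sub>C (x::'a::complex_vector) = 0"
  using scaleR_scaleC[of 0 x] by simp

lemma scaleC_zero_right[simp]: "c *\<^sub>C (0::'a::complex_vector) = 0"
  using scaleC_add_right[of c "0::'a" 0] by simp

lemma scaleC_minus_left: "(- c) *\<^sub>C (x::'a::complex_vector) = - (c *\<^sub>C x)"
  using scaleC_add_left[of c "-c" x] by (simp add: minus_unique[symmetric])

lemma scaleC_minus_right: "c *\<^sub>C (- x::'a::complex_vector) = - (c *\<^sub>C x)"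
  using scaleC_add_right[of c x "-x"] by (simp add: minus_unique[symmetric])

lemma scaleC_diff_right: "c *\<^sub>C (x - y::'a::complex_vector) = c *\<^sub>C x - c *\<^sub>C y"
  using scaleC_add_right[of c x "-y"] by (simp add: scaleC_minus_right)

lemma scaleC_diff_left: "(a - b) *\<^sub>C (x::'a::complex_vector) = a *\<^sub>C x - b *\<^sub>C x"
  using scaleC_add_left[of a "-b" x] by (simp add: scaleC_minus_left)

lemma scaleR_scaleC_comm: "r *\<^sub>R (c *\<^sub>C (x::'a::complex_vector)) = c *\<^sub>C (r *\<^sub>R x)"
  by (simp add: scaleR_scaleC scaleC_scaleC mult.commute)

lemma cinner_zero_left[simp]: "cinner 0 (y::'a::complex_inner) = 0"
  using cinner_add_left[of "0::'a" 0 y] by simp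

lemma cinner_zero_right[simp]: "cinner (y::'a::complex_inner) 0 = 0"
  using cinner_commute[of y 0] by simp

lemma cinner_add_right: "cinner (x::'a::complex_inner) (y + z) = cinner x y + cinner x z"
  by (metis cinner_add_left cinner_commute complex_cnj_add)

lemma cinner_scaleC_right: "cinner (x::'a::complex_inner) (c *\<^sub>C y) = c * cinner x y"
  by (metis cinner_commute cinner_scaleC_left complex_cnj_cnj complex_cnj_mult)

lemma cinner_minus_left: "cinner (- x::'a::complex_inner) y = - cinner x y"
  using cinner_add_left[of x "-x" y] by (simp add: minus_unique[symmetric])

lemma cinner_minus_right: "cinner (x::'a::complex_inner) (- y) = - cinner x y"
  using cinner_add_right[of x y "-y"] by (simp add: minus_unique[symmetric])

lemma cinner_diff_left: "cinner (x - z::'a::complex_inner) y = cinner x y - cinner z y"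
  using cinner_add_left[of x "-z" y] by (simp add: cinner_minus_left)

lemma cinner_diff_right: "cinner (x::'a::complex_inner) (y - z) = cinner x y - cinner x z"
  using cinner_add_right[of x y "-z"] by (simp add: cinner_minus_right)

lemma cinner_scaleR_left: "cinner (r *\<^sub>R x::'a::complex_inner) y = complex_of_real r * cinner x y"
  by (simp add: scaleR_scaleC cinner_scaleC_left)

lemma cinner_scaleR_right: "cinner (x::'a::complex_inner) (r *\<^sub>R y) = complex_of_real r * cinner x y"
  by (simp add: scaleR_scaleC cinner_scaleC_right)

lemmas cinner_simps = cinner_add_left cinner_add_right cinner_diff_left cinner_diff_right
  cinner_minus_left cinner_minus_right cinner_scaleC_left cinner_scaleC_right
  cinner_scaleR_left cinner_scaleR_right

lemma cinner_self: "cinner (x::'a::complex_inner) x = complex_of_real ((norm x)\<^sup>2)"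
  using cinner_self_real[of x] cinner_self_nonneg[of x] norm_eq_sqrt_cinner[of x]
  by (simp add: complex_eq_iff)

lemma cinner_nondeg: "(\<And>y. cinner y (x::'a::complex_inner) = 0) \<Longrightarrow> x = 0"
  using cinner_self_eq_zero by blast

lemma cinner_ext: "(\<And>y. cinner y (x::'a::complex_inner) = cinner y z) \<Longrightarrow> x = z"
  using cinner_nondeg[of "x - z"] by (simp add: cinner_diff_right)

lemma cauchy_schwarz: "cmod (cinner (x::'a::complex_inner) y) \<le> norm x * norm y"
proof (cases "y = 0")
  case True thus ?thesis by simp
next
  case False
  define t where "t = cinner y x / cinner y y"
  have yy: "cinner y y = complex_of_real ((norm y)\<^sup>2)" by (rule cinner_self)
  have ny: "norm y > 0" using False by simp
  have "0 \<le> Re (cinner (x - t *\<^sub>C y) (x - t *\<^sub>C y))" by (rule cinner_self_nonneg)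
  also have "cinner (x - t *\<^sub>C y) (x - t *\<^sub>C y) = cinner x x - t * cinner x y - cnj t * cinner y x + cnj t * t * cinner y y"
    by (simp add: cinner_simps algebra_simps)
  also have "\<dots> = cinner x x - cinner y x * cnj (cinner y x) / cinner y y"
    using ny unfolding t_def yy
    apply (subst cinner_commute[of x y])
    by (simp add: field_simps power2_eq_square)
  finally have "cmod (cinner y x) ^2 / (norm y)\<^sup>2 \<le> (norm x)\<^sup>2"
    unfolding yy cinner_self[of x]
    by (simp add: complex_mult_cnj cmod_power2 del: of_real_power)
  hence "cmod (cinner y x) ^2 \<le> (norm x * norm y)\<^sup>2"
    using ny by (simp add: field_simps power_mult_distrib)
  hence "cmod (cinner y x) \<le> norm x * norm y"
    by (simp add: power_mono_iff abs_le_square_iff)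
  thus ?thesis by (metis cinner_commute complex_mod_cnj)
qed

lemma cinner_proj_expand:
  fixes x y :: "'a::complex_inner"
  assumes "y \<noteq> 0"
  defines "t \<equiv> cinner y x / cinner y y"
  shows "Re (cinner (x - t *\<^sub>C y) (x - t *\<^sub>C y)) = (norm x)\<^sup>2 - (cmod (cinner y x))\<^sup>2 / (norm y)\<^sup>2"
proof -
  have yy: "cinner y y = complex_of_real ((norm y)\<^sup>2)" by (rule cinner_self)
  have ny: "norm y > 0" using assms by simp
  have "cinner (x - t *\<^sub>C y) (x - t *\<^sub>C y) = cinner x x - t * cinner x y - cnj t * cinner y x + cnj t * t * cinner y y"
    by (simp add: cinner_simps algebra_simps)
  also have "\<dots> = cinner x x - cinner y x * cnj (cinner y x) / cinner y y"
    using ny unfolding t_def yy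
    apply (subst cinner_commute[of x y])
    by (simp add: field_simps power2_eq_square)
  finally show ?thesis
    unfolding yy cinner_self[of x]
    by (simp add: complex_mult_cnj cmod_power2 del: of_real_power)
qed

lemma bounded_linear_cinner_right: "bounded_linear (\<lambda>x. cinner (y::'a::complex_inner) x)"
proof (rule bounded_linear_intro[where K="norm y"])
  fix x z :: 'a show "cinner y (x + z) = cinner y x + cinner y z" by (rule cinner_add_right)
next
  fix r and x :: 'a show "cinner y (r *\<^sub>R x) = r *\<^sub>R cinner y x"
    by (simp add: cinner_scaleR_right scaleR_conv_of_real)
next
  fix x :: 'a show "norm (cinner y x) \<le> norm x * norm y"
    using cauchy_schwarz[of y x] by (simp add: mult.commute)
qed

lemma continuous_on_cinner_right: "continuous_on S (\<lambda>x. cinner (y::'a::complex_inner) x)"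
  using bounded_linear_cinner_right linear_continuous_on by blast

lemma parallelogram:
  fixes a b :: "'a::complex_inner"
  shows "(norm (a - b))\<^sup>2 + (norm (a + b))\<^sup>2 = 2 * (norm a)\<^sup>2 + 2 * (norm b)\<^sup>2"
proof -
  have "complex_of_real ((norm (a - b))\<^sup>2 + (norm (a + b))\<^sup>2) = cinner (a - b) (a - b) + cinner (a + b) (a + b)"
    by (simp add: cinner_self)
  also have "\<dots> = 2 * cinner a a + 2 * cinner b b"
    by (simp add: cinner_simps algebra_simps)
  also have "\<dots> = complex_of_real (2 * (norm a)\<^sup>2 + 2 * (norm b)\<^sup>2)"
    by (simp add: cinner_self)
  finally show ?thesis using of_real_eq_iff by blast
qed

lemma csubspace_diff: "csubspace M \<Longrightarrow> x \<in> M \<Longrightarrow> y \<in> M \<Longrightarrow> x - y \<in> M"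
  unfolding csubspace_def
  by (metis scaleC_minus_left scaleC_one diff_conv_add_uminus)

lemma csubspace_scaleR: "csubspace M \<Longrightarrow> x \<in> M \<Longrightarrow> r *\<^sub>R x \<in> M"
  unfolding csubspace_def by (simp add: scaleR_scaleC)

lemma proj_exists:
  fixes N :: "'a::chilbert_space set"
  assumes cl: "closed N" and sub: "csubspace N"
  shows "\<exists>m\<in>N. \<forall>n\<in>N. cinner n (x - m) = 0"
proof -
  define D where "D = (\<lambda>n. norm (x - n)) ` N"
  define d where "d = Inf D"
  have ne: "D \<noteq> {}" using sub unfolding csubspace_def D_def by blast
  have bdd: "bdd_below D" unfolding D_def by (rule bdd_belowI[where m=0]) auto
  have dle: "d \<le> norm (x - n)" if "n \<in> N" for n
    unfolding d_def D_def using bdd that D_def by (auto intro: cInf_lower)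
  have d0: "0 \<le> d" unfolding d_def using ne by (rule cInf_greatest) (auto simp: D_def)
  have "\<forall>k::nat. \<exists>n\<in>N. norm (x - n) < d + 1 / (real k + 1)"
  proof
    fix k :: nat
    have "Inf D < d + 1 / (real k + 1)" unfolding d_def by (simp add: add_pos_pos)
    from cInf_lessD[OF ne this] show "\<exists>n\<in>N. norm (x - n) < d + 1 / (real k + 1)"
      unfolding D_def by auto
  qed
  then obtain s where sN: "\<And>k. s k \<in> N" and sd: "\<And>k. norm (x - s k) < d + 1 / (real k + 1)"
    by metis
  define c where "c = 2 * d + 1"
  have c0: "c > 0" using d0 by (simp add: c_def)
  have sq: "(norm (x - s k))\<^sup>2 \<le> d\<^sup>2 + c / (real k + 1)" for k
  proof -
    have e1: "1 / (real k + 1) \<le> 1" by (simp add: divide_le_eq)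
    have "(norm (x - s k))\<^sup>2 \<le> (d + 1 / (real k + 1))\<^sup>2"
      using sd[of k] by (intro power_mono) auto
    also have "\<dots> = d\<^sup>2 + (2 * d + 1 / (real k + 1)) * (1 / (real k + 1))"
      by (simp add: power2_eq_square algebra_simps)
    also have "\<dots> \<le> d\<^sup>2 + c * (1 / (real k + 1))"
      unfolding c_def using e1 by (intro add_left_mono mult_right_mono) auto
    finally show ?thesis by simp
  qed
  have pair: "(norm (s j - s k))\<^sup>2 \<le> 2 * c / (real j + 1) + 2 * c / (real k + 1)" for j k
  proof -
    have mid: "(1/2::real) *\<^sub>R (s j + s k) \<in> N"
      using sub sN unfolding csubspace_def by (simp add: csubspace_scaleR[OF sub])
    have "2 * d \<le> 2 * norm (x - (1/2::real) *\<^sub>R (s j + s k))" using dle[OF mid] by simp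
    also have "2 * norm (x - (1/2::real) *\<^sub>R (s j + s k)) = norm ((x - s j) + (x - s k))"
    proof -
      have "(x - s j) + (x - s k) = 2 *\<^sub>R (x - (1/2::real) *\<^sub>R (s j + s k))"
        by (simp add: algebra_simps scaleR_2)
      thus ?thesis by simp
    qed
    finally have "2 * d \<le> norm ((x - s j) + (x - s k))" .
    hence h: "4 * d\<^sup>2 \<le> (norm ((x - s j) + (x - s k)))\<^sup>2"
      using d0 by (metis power_mono mult_nonneg_nonneg zero_le_numeral power_mult_distrib
          numeral_times_numeral semiring_norm(12) power2_eq_square[of "2::real"] num_double)
    have "s j - s k = (x - s k) - (x - s j)" by simp
    hence "(norm (s j - s k))\<^sup>2 = 2 * (norm (x - s k))\<^sup>2 + 2 * (norm (x - s j))\<^sup>2 - (norm ((x - s k) + (x - s j)))\<^sup>2"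
      using parallelogram[of "x - s k" "x - s j"] by simp
    thus ?thesis using sq[of j] sq[of k] h by (simp add: add.commute)
  qed
  have "Cauchy s"
  proof (rule metric_CauchyI)
    fix e :: real assume e: "e > 0"
    obtain M :: nat where M: "4 * c / e\<^sup>2 < real M" using reals_Archimedean2 by blast
    have Mpos: "4 * c / (real M + 1) < e\<^sup>2"
      using M e c0 by (simp add: field_simps add_pos_pos less_add_same_cancel2 add.commute, smt (verit) zero_less_power)
    show "\<exists>M. \<forall>m\<ge>M. \<forall>n\<ge>M. dist (s m) (s n) < e"
    proof (intro exI allI impI)
      fix m n assume mM: "M \<le> m" and nM: "M \<le> n"
      have a: "2 * c / (real m + 1) \<le> 2 * c / (real M + 1)"
        using mM c0 by (intro divide_left_mono) auto
      have b: "2 * c / (real n + 1) \<le> 2 * c / (real M + 1)"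
        using nM c0 by (intro divide_left_mono) auto
      have "(norm (s m - s n))\<^sup>2 < e\<^sup>2"
        using pair[of m n] a b Mpos by simp
      hence "norm (s m - s n) < e" using e by (simp add: power_less_imp_less_base)
      thus "dist (s m) (s n) < e" by (simp add: dist_norm)
    qed
  qed
  then obtain m where lim: "s \<longlonglongrightarrow> m" using Cauchy_convergent_iff convergent_def by blast
  have mN: "m \<in> N" using closed_sequentially[OF cl sN lim] .
  have l1: "(\<lambda>k. norm (x - s k)) \<longlonglongrightarrow> norm (x - m)"
    by (intro tendsto_intros lim)
  have l2: "(\<lambda>k. d + 1 / (real k + 1)) \<longlonglongrightarrow> d + 0"
  proof -
    have "(\<lambda>k. 1 / (real k + 1)) \<longlonglongrightarrow> 0"
      using LIMSEQ_inverse_real_of_nat by (simp add: inverse_eq_divide add.commute)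
    thus ?thesis by (intro tendsto_intros)
  qed
  have mind: "norm (x - m) \<le> d"
    using LIMSEQ_le[OF l1 l2] sd by (simp add: less_imp_le)
  have orth: "cinner n (x - m) = 0" if nN: "n \<in> N" for n
  proof (rule ccontr)
    assume ne0: "cinner n (x - m) \<noteq> 0"
    hence n0: "n \<noteq> 0" by auto
    define t where "t = cinner n (x - m) / cinner n n"
    have "m + t *\<^sub>C n \<in> N" using sub nN mN unfolding csubspace_def by blast
    hence "d \<le> norm (x - (m + t *\<^sub>C n))" by (rule dle)
    hence "(norm (x - m))\<^sup>2 \<le> (norm ((x - m) - t *\<^sub>C n))\<^sup>2"
      using mind d0 by (simp add: diff_diff_eq power_mono)
    also have "\<dots> = Re (cinner ((x - m) - t *\<^sub>C n) ((x - m) - t *\<^sub>C n))"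
      by (simp add: cinner_self)
    also have "\<dots> = (norm (x - m))\<^sup>2 - (cmod (cinner n (x - m)))\<^sup>2 / (norm n)\<^sup>2"
      unfolding t_def by (rule cinner_proj_expand[OF n0])
    finally have "(cmod (cinner n (x - m)))\<^sup>2 / (norm n)\<^sup>2 \<le> 0" by simp
    moreover have "(cmod (cinner n (x - m)))\<^sup>2 / (norm n)\<^sup>2 > 0" using ne0 n0 by simp
    ultimately show False by simp
  qed
  show ?thesis using mN orth by blast
qed

lemma riesz:
  fixes f :: "'a::chilbert_space \<Rightarrow> complex"
  assumes bl: "bounded_linear f" and hom: "\<And>c x. f (c *\<^sub>C x) = c * f x"
  shows "\<exists>z. \<forall>x. f x = cinner z x"
proof (cases "\<forall>x. f x = 0")
  case True thus ?thesis by (intro exI[of _ 0]) simp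
next
  case False
  then obtain x0 where fx0: "f x0 \<noteq> 0" by blast
  let ?N = "{x. f x = 0}"
  have add: "f (x + y) = f x + f y" for x y using bl by (simp add: linear_simps)
  have diff: "f (x - y) = f x - f y" for x y using bl by (simp add: linear_simps)
  have cl: "closed ?N"
    by (rule closed_Collect_eq) (auto intro: linear_continuous_on bl)
  have sub: "csubspace ?N" unfolding csubspace_def
    using add hom bl by (auto simp: linear_simps)
  obtain m where mN: "f m = 0" and orth: "\<And>n. f n = 0 \<Longrightarrow> cinner n (x0 - m) = 0"
    using proj_exists[OF cl sub, of x0] by auto
  define u where "u = x0 - m"
  have fu: "f u \<noteq> 0" using fx0 mN by (simp add: u_def diff)
  have uu: "cinner u u = complex_of_real ((norm u)\<^sup>2)" by (rule cinner_self)
  have u0: "u \<noteq> 0" using fu bl by (auto simp: linear_simps)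
  hence uu0: "cinner u u \<noteq> 0" by (simp add: cinner_self_eq_zero)
  define z where "z = cnj (f u / cinner u u) *\<^sub>C u"
  have "f x = cinner z x" for x
  proof -
    define w where "w = x - (f x / f u) *\<^sub>C u"
    have "f w = 0" using fu by (simp add: w_def diff hom)
    hence "cinner w u = 0" using orth unfolding u_def by blast
    hence "cinner x u = cnj (f x / f u) * cinner u u"
      unfolding w_def by (simp add: cinner_simps)
    hence "cinner u x = (f x / f u) * cinner u u"
      by (metis cinner_commute complex_cnj_cnj complex_cnj_mult uu complex_cnj_complex_of_real)
    thus ?thesis unfolding z_def using fu uu0 by (simp add: cinner_simps)
  qed
  thus ?thesis by blast
qed

lemma bcl_linear: "bounded_clinear T \<Longrightarrow> bounded_linear T"
  unfolding bounded_clinear_def by simp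

lemma bcl_hom: "bounded_clinear T \<Longrightarrow> T (c *\<^sub>C x) = c *\<^sub>C T x"
  unfolding bounded_clinear_def by simp

lemma adjoint_exists:
  fixes T :: "'a::chilbert_space \<Rightarrow> 'a"
  assumes "bounded_clinear T"
  shows "cinner (T x) y = cinner x (cadjoint T y)"
proof -
  have "\<forall>y. \<exists>z. \<forall>x. cinner y (T x) = cinner z x"
  proof
    fix y
    show "\<exists>z. \<forall>x. cinner y (T x) = cinner z x"
    proof (rule riesz)
      show "bounded_linear (\<lambda>x. cinner y (T x))"
        using bounded_linear_compose[OF bounded_linear_cinner_right bcl_linear[OF assms]] .
      show "cinner y (T (c *\<^sub>C x)) = c * cinner y (T x)" for c x
        using bcl_hom[OF assms] by (simp add: cinner_scaleC_right)
    qed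
  qed
  then obtain S where S: "\<And>y x. cinner y (T x) = cinner (S y) x" by metis
  have "\<forall>x y. cinner (T x) y = cinner x (S y)"
    by (metis S cinner_commute)
  hence "\<exists>S. \<forall>x y. cinner (T x) y = cinner x (S y)" by blast
  hence "\<forall>x y. cinner (T x) y = cinner x (cadjoint T y)"
    unfolding cadjoint_def by (rule someI_ex)
  thus ?thesis by blast
qed

lemma adjoint_exists2:
  fixes T :: "'a::chilbert_space \<Rightarrow> 'a"
  assumes "bounded_clinear T"
  shows "cinner (cadjoint T x) y = cinner x (T y)"
  by (metis adjoint_exists[OF assms] cinner_commute)

lemma adjoint_bcl:
  fixes T :: "'a::chilbert_space \<Rightarrow> 'a"
  assumes T: "bounded_clinear T"
  shows "bounded_clinear (cadjoint T)"
proof -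
  let ?S = "cadjoint T"
  have add: "?S (x + y) = ?S x + ?S y" for x y
    by (rule cinner_ext) (simp add: adjoint_exists[OF T, symmetric] cinner_simps)
  have hom: "?S (c *\<^sub>C x) = c *\<^sub>C ?S x" for c x
    by (rule cinner_ext) (simp add: adjoint_exists[OF T, symmetric] cinner_simps)
  have sc: "?S (r *\<^sub>R x) = r *\<^sub>R ?S x" for r x
    by (simp add: scaleR_scaleC hom)
  obtain K where K: "K > 0" "\<And>x. norm (T x) \<le> norm x * K"
    using bounded_linear.pos_bounded[OF bcl_linear[OF T]] by blast
  have bd: "norm (?S y) \<le> norm y * K" for y
  proof (cases "?S y = 0")
    case True thus ?thesis using K by simp
  next
    case False
    have "(norm (?S y))\<^sup>2 = Re (cinner (?S y) (?S y))" by (simp add: cinner_self)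
    also have "\<dots> = Re (cinner (T (?S y)) y)" by (simp add: adjoint_exists[OF T])
    also have "\<dots> \<le> cmod (cinner (T (?S y)) y)" by (rule complex_Re_le_cmod)
    also have "\<dots> \<le> norm (T (?S y)) * norm y" by (rule cauchy_schwarz)
    also have "\<dots> \<le> norm (?S y) * K * norm y" using K by (simp add: mult_right_mono)
    finally have "norm (?S y) * norm (?S y) \<le> norm (?S y) * (norm y * K)"
      by (simp add: power2_eq_square mult_ac)
    thus ?thesis using False by simp
  qed
  have "bounded_linear ?S" by (rule bounded_linear_intro[OF add sc bd])
  thus ?thesis unfolding bounded_clinear_def using hom by blast
qed

lemma bcl_add: "bounded_clinear T \<Longrightarrow> T (x + y) = T x + T y"
  using bcl_linear[of T] by (simp add: linear_simps)
lemma bcl_diff: "bounded_clinear T \<Longrightarrow> T (x - y) = T x - T y"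
  using bcl_linear[of T] by (simp add: linear_simps)
lemma bcl_scaleR: "bounded_clinear T \<Longrightarrow> T (r *\<^sub>R x) = r *\<^sub>R T x"
  using bcl_linear[of T] by (simp add: linear_simps)
lemma bcl_zero: "bounded_clinear T \<Longrightarrow> T 0 = 0"
  using bcl_linear[of T] by (simp add: linear_simps)

lemma bcl_comp: "bounded_clinear f \<Longrightarrow> bounded_clinear g \<Longrightarrow> bounded_clinear (\<lambda>x. f (g x))"
  unfolding bounded_clinear_def
  using bounded_linear_compose[of f g] by auto

lemma bcl_id: "bounded_clinear (\<lambda>x. x)"
  unfolding bounded_clinear_def by (simp add: bounded_linear_ident)

lemma bcl_lin:
  assumes "bounded_clinear f" "bounded_clinear g"
  shows "bounded_clinear (\<lambda>x. f x - a *\<^sub>R g x)"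
  using assms unfolding bounded_clinear_def
  by (auto intro!: bounded_linear_sub bounded_linear_compose[OF bounded_linear_scaleR_right] simp: scaleC_diff_right scaleR_scaleC_comm)

lemma bcl_plus:
  assumes "bounded_clinear f" "bounded_clinear g"
  shows "bounded_clinear (\<lambda>x. f x + g x)"
  using assms unfolding bounded_clinear_def
  by (auto intro!: bounded_linear_add simp: scaleC_add_right)

fun wapp :: "('a \<Rightarrow> 'a) \<Rightarrow> ('a \<Rightarrow> 'a) \<Rightarrow> bool list \<Rightarrow> 'a \<Rightarrow> 'a" where
  "wapp f g [] x = x"
| "wapp f g (b # w) x = wapp f g w (if b then f x else g x)"

lemma wapp_comm:
  assumes "\<And>x. f (h x) = h (f x)" "\<And>x. g (h x) = h (g x)"
  shows "wapp f g w (h x) = h (wapp f g w x)"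
  using assms by (induction w arbitrary: x) auto

lemma wapp_in:
  assumes "f ` M \<subseteq> M" "g ` M \<subseteq> M" "x \<in> M"
  shows "wapp f g w x \<in> M"
  using assms by (induction w arbitrary: x) auto

lemma wapp_bcl:
  assumes "bounded_clinear f" "bounded_clinear g"
  shows "bounded_clinear (wapp f g w)"
proof (induction w)
  case Nil thus ?case using bcl_id by simp
next
  case (Cons b w)
  have e: "wapp f g (b # w) = (\<lambda>x. wapp f g w ((if b then f else g) x))" by auto
  show ?case unfolding e using bcl_comp[OF Cons assms(1)] bcl_comp[OF Cons assms(2)] by (cases b) auto
qed

lemma ker_family:
  fixes F :: "'i \<Rightarrow> 'a::complex_inner \<Rightarrow> 'a"
  assumes "\<And>w. bounded_clinear (F w)"
  shows "closed_csubspace {x. \<forall>w. F w x = 0}"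
  unfolding closed_csubspace_def csubspace_def
proof (intro conjI)
  show "closed {x. \<forall>w. F w x = 0}"
    by (intro closed_Collect_all closed_Collect_eq linear_continuous_on continuous_on_const
        bcl_linear assms)
qed (auto simp: bcl_zero[OF assms] bcl_add[OF assms] bcl_hom[OF assms])

lemma closed_csubspace_orth:
  "closed_csubspace (orthogonal_complement (M::'a::complex_inner set))"
  unfolding closed_csubspace_def csubspace_def orthogonal_complement_def
proof (intro conjI)
  have "closed {x. \<forall>y. y \<in> M \<longrightarrow> cinner y x = 0}"
    by (intro closed_Collect_all closed_Collect_imp closed_Collect_eq continuous_on_cinner_right
        continuous_on_const) auto
  thus "closed {x. \<forall>y\<in>M. cinner y x = 0}" by (simp only: Ball_def)
qed (auto simp: cinner_simps)

lemma orth_proj_diff: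
  assumes "orth_proj_on M P" "csubspace M" "x \<in> M" "y \<in> M"
  shows "P (x - y) = P x - P y"
proof -
  have m: "(-1::complex) *\<^sub>C y \<in> M" using assms unfolding csubspace_def by blast
  have "P (x - y) = P (x + (-1::complex) *\<^sub>C y)" by (simp add: scaleC_minus_left scaleC_one)
  also have "\<dots> = P x + (-1::complex) *\<^sub>C P y"
    using assms m unfolding orth_proj_on_def by simp
  finally show ?thesis by (simp add: scaleC_minus_left scaleC_one)
qed

lemma orth_proj_add:
  assumes "orth_proj_on M P" "x \<in> M" "y \<in> M"
  shows "P (x + y) = P x + P y"
  using assms unfolding orth_proj_on_def by simp

lemma orth_proj_scaleR:
  assumes "orth_proj_on M P" "x \<in> M"
  shows "P (r *\<^sub>R x) = r *\<^sub>R P x"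
  using assms unfolding orth_proj_on_def by (simp add: scaleR_scaleC)

lemma orth_proj_in: "orth_proj_on M P \<Longrightarrow> x \<in> M \<Longrightarrow> P x \<in> M"
  unfolding orth_proj_on_def by simp

lemma orth_proj_idem: "orth_proj_on M P \<Longrightarrow> x \<in> M \<Longrightarrow> P (P x) = P x"
  unfolding orth_proj_on_def by simp

theorem lemma3p5:
  fixes A B :: "'a::chilbert_space \<Rightarrow> 'a" and r :: real and H1 H2 :: "'a set"
  assumes "0 < r" and "r < 1"
    and "C1r r A" and "C1r r B"
    and "\<forall>x. A (B x) = B (A x)"
    and "\<forall>x. A (cadjoint B x) = cadjoint B (A x)"
    and "reduces A H1" and "classC1r_on r H1 A"
    and "\<forall>M. reduces A M \<and> classC1r_on r M A \<longrightarrow> M \<subseteq> H1"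
    and "H2 = orthogonal_complement H1"
  shows "reduces B H1 \<and> reduces B H2"
proof -
  have A: "bounded_clinear A" using assms(3) unfolding C1r_def invertible_op_def by blast
  have B: "bounded_clinear B" using assms(4) unfolding C1r_def invertible_op_def by blast
  define As where "As = cadjoint A"
  define Bs where "Bs = cadjoint B"
  have As: "bounded_clinear As" unfolding As_def by (rule adjoint_bcl[OF A])
  have Bs: "bounded_clinear Bs" unfolding Bs_def by (rule adjoint_bcl[OF B])
  have adjA: "\<And>x y. cinner (A x) y = cinner x (As y)" unfolding As_def by (rule adjoint_exists[OF A])
  have adjA2: "\<And>x y. cinner (As x) y = cinner x (A y)" unfolding As_def by (rule adjoint_exists2[OF A])
  have adjB: "\<And>x y. cinner (B x) y = cinner x (Bs y)" unfolding Bs_def by (rule adjoint_exists[OF B])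
  have adjB2: "\<And>x y. cinner (Bs x) y = cinner x (B y)" unfolding Bs_def by (rule adjoint_exists2[OF B])
  have AB: "\<And>x. B (A x) = A (B x)" using assms(5) by simp
  have BsA: "\<And>x. Bs (A x) = A (Bs x)" using assms(6) unfolding Bs_def by simp
  have BAs: "B (As x) = As (B x)" for x
  proof (rule cinner_ext)
    fix y
    have "cinner y (B (As x)) = cinner (Bs y) (As x)" by (simp add: adjB2)
    also have "\<dots> = cinner (A (Bs y)) x" by (simp add: adjA)
    also have "\<dots> = cinner (Bs (A y)) x" by (simp add: BsA)
    also have "\<dots> = cinner (A y) (B x)" by (simp add: adjB2)
    also have "\<dots> = cinner y (As (B x))" by (simp add: adjA)
    finally show "cinner y (B (As x)) = cinner y (As (B x))" .
  qed
  have BsAs: "Bs (As x) = As (Bs x)" for x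
  proof (rule cinner_ext)
    fix y
    have "cinner y (Bs (As x)) = cinner (B y) (As x)" by (simp add: adjB)
    also have "\<dots> = cinner (A (B y)) x" by (simp add: adjA)
    also have "\<dots> = cinner (B (A y)) x" by (simp add: AB)
    also have "\<dots> = cinner (A y) (Bs x)" by (simp add: adjB)
    also have "\<dots> = cinner y (As (Bs x))" by (simp add: adjA)
    finally show "cinner y (Bs (As x)) = cinner y (As (Bs x))" .
  qed
  have H1r: "closed_csubspace H1" "A ` H1 \<subseteq> H1" "As ` H1 \<subseteq> H1"
    using assms(7) unfolding reduces_def As_def by auto
  have H1s: "csubspace H1" using H1r(1) unfolding closed_csubspace_def by simp
  define \<rho> where "\<rho> = r\<^sup>2"
  have \<rho>1: "\<rho> < 1" "0 < \<rho>" unfolding \<rho>_def using assms(1,2)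
    by (auto simp: power2_eq_square mult_less_cancel_left1 intro: less_trans[of "r*r" r 1])
  have c\<rho>: "complex_of_real \<rho> \<noteq> 1" using \<rho>1 by (metis of_real_eq_1_iff less_irrefl)
  define k where "k = 1 / (1 - \<rho>)"
  define T where "T = (\<lambda>x. As (A x))"
  have T: "bounded_clinear T" unfolding T_def by (rule bcl_comp[OF As A])
  have Tsa: "\<And>x y. cinner (T x) y = cinner x (T y)" by (simp add: T_def adjA2 adjA)
  have TA: "\<And>x y. cinner (A x) (A y) = cinner x (T y)" by (simp add: T_def adjA)
  define D where "D = (\<lambda>y. (T (T y) - (1 + \<rho>) *\<^sub>R T y) - (- \<rho>) *\<^sub>R y)"
  have D: "bounded_clinear D" unfolding D_def
    by (rule bcl_lin[OF bcl_lin[OF bcl_comp[OF T T] T] bcl_id])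
  define F where "F = (\<lambda>w x. D (wapp A As w x))"
  have Fb: "\<And>w. bounded_clinear (F w)" unfolding F_def by (rule bcl_comp[OF D wapp_bcl[OF A As]])
  define K where "K = {x. \<forall>w. F w x = 0}"
  have Kcs: "closed_csubspace K" unfolding K_def by (rule ker_family[OF Fb])
  have Ks: "csubspace K" using Kcs unfolding closed_csubspace_def by simp
  have KA: "A x \<in> K" if "x \<in> K" for x
  proof -
    have "F (True # w) x = 0" for w using that K_def by blast
    thus ?thesis unfolding K_def F_def by simp
  qed
  have KAs: "As x \<in> K" if "x \<in> K" for x
  proof -
    have "F (False # w) x = 0" for w using that K_def by blast
    thus ?thesis unfolding K_def F_def by simp
  qed
  have Kcomm: "h x \<in> K" if h: "bounded_clinear h" "\<And>x. h (A x) = A (h x)" "\<And>x. h (As x) = As (h x)"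
    and x: "x \<in> K" for h x
  proof -
    have hT: "h (T y) = T (h y)" for y by (simp add: T_def h)
    have hD: "D (h y) = h (D y)" for y
      by (simp add: D_def hT bcl_diff[OF h(1)] bcl_add[OF h(1)] bcl_scaleR[OF h(1)])
    have "F w (h x) = 0" for w
    proof -
      have "F w (h x) = h (F w x)" unfolding F_def
        by (simp add: wapp_comm[of A h As, OF h(2)[symmetric] h(3)[symmetric]] hD)
      also have "\<dots> = 0" using x unfolding K_def by (simp add: bcl_zero[OF h(1)])
      finally show ?thesis .
    qed
    thus ?thesis unfolding K_def by simp
  qed
  have Dz: "D y = 0" if y: "y \<in> H1" for y
  proof -
    obtain P0 P1 where p0: "orth_proj_on H1 P0" and p1: "orth_proj_on H1 P1"
      and sum: "\<forall>x\<in>H1. P0 x + P1 x = x"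
      and inn: "\<forall>x\<in>H1. \<forall>y\<in>H1. cinner (A x) (A y) = cinner x (P0 y + complex_of_real (r\<^sup>2) *\<^sub>C P1 y)"
      using assms(8) unfolding classC1r_on_def by blast
    define Q where "Q = (\<lambda>v. P0 v + \<rho> *\<^sub>R P1 v)"
    have QH: "Q v \<in> H1" if "v \<in> H1" for v
      unfolding Q_def using H1s orth_proj_in[OF p0 that] orth_proj_in[OF p1 that] csubspace_scaleR[OF H1s]
      unfolding csubspace_def by blast
    have TQ: "T v = Q v" if v: "v \<in> H1" for v
    proof -
      have Tv: "T v \<in> H1" unfolding T_def using H1r(2,3) v by blast
      define e where "e = T v - Q v"
      have eH: "e \<in> H1" unfolding e_def by (rule csubspace_diff[OF H1s Tv QH[OF v]])
      have "cinner e (T v) = cinner e (Q v)"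
        using inn eH v TA[of e v] by (simp add: Q_def \<rho>_def scaleR_scaleC)
      hence "cinner e (T v - Q v) = 0" by (simp add: cinner_diff_right)
      hence "cinner e e = 0" by (simp add: e_def[symmetric])
      hence "e = 0" using cinner_self_eq_zero by blast
      thus ?thesis unfolding e_def by simp
    qed
    define p where "p = P0 y"
    define q where "q = P1 y"
    have pH: "p \<in> H1" unfolding p_def by (rule orth_proj_in[OF p0 y])
    have qH: "q \<in> H1" unfolding q_def by (rule orth_proj_in[OF p1 y])
    have qrH: "\<rho> *\<^sub>R q \<in> H1" by (rule csubspace_scaleR[OF H1s qH])
    have yq: "y = p + q" using sum y by (simp add: p_def q_def)
    have P0p: "P0 p = p" unfolding p_def by (rule orth_proj_idem[OF p0 y])
    have P1q: "P1 q = q" unfolding q_def by (rule orth_proj_idem[OF p1 y])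
    have P0q: "P0 q = 0"
    proof -
      have "q = y - p" using yq by simp
      hence "P0 q = P0 y - P0 p" using orth_proj_diff[OF p0 H1s y pH] by simp
      thus ?thesis using P0p p_def by simp
    qed
    have P1p: "P1 p = 0"
    proof -
      have "p = y - q" using yq by simp
      hence "P1 p = P1 y - P1 q" using orth_proj_diff[OF p1 H1s y qH] by simp
      thus ?thesis using P1q q_def by simp
    qed
    have Ty: "T y = p + \<rho> *\<^sub>R q" using TQ[OF y] by (simp add: Q_def p_def q_def)
    have pq: "p + \<rho> *\<^sub>R q \<in> H1" using H1s pH qrH unfolding csubspace_def by blast
    have "T (T y) = Q (p + \<rho> *\<^sub>R q)" using Ty TQ[OF pq] by simp
    also have "\<dots> = (P0 p + \<rho> *\<^sub>R P0 q) + \<rho> *\<^sub>R (P1 p + \<rho> *\<^sub>R P1 q)"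
      unfolding Q_def using orth_proj_add[OF p0 pH qrH] orth_proj_add[OF p1 pH qrH]
        orth_proj_scaleR[OF p0 qH] orth_proj_scaleR[OF p1 qH] by simp
    also have "\<dots> = p + (\<rho> * \<rho>) *\<^sub>R q" by (simp add: P0p P0q P1p P1q)
    finally have TTy: "T (T y) = p + (\<rho> * \<rho>) *\<^sub>R q" .
    show ?thesis unfolding D_def using Ty TTy yq by (simp add: algebra_simps)
  qed
  have H1K: "H1 \<subseteq> K"
  proof
    fix x assume x: "x \<in> H1"
    have "F w x = 0" for w unfolding F_def by (rule Dz[OF wapp_in[OF H1r(2,3) x]])
    thus "x \<in> K" unfolding K_def by simp
  qed
  have KH1: "K \<subseteq> H1"
  proof -
    have r: "reduces A K" unfolding reduces_def using Kcs KA KAs As_def by auto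
    have c: "classC1r_on r K A"
    proof -
      define P0 where "P0 = (\<lambda>y. k *\<^sub>R (T y - \<rho> *\<^sub>R y))"
      define P1 where "P1 = (\<lambda>y. k *\<^sub>R (y - T y))"
      have kc: "complex_of_real k * (1 - complex_of_real \<rho>) = 1"
        unfolding k_def using c\<rho> by (simp add: field_simps)
      have KT: "T y \<in> K" if "y \<in> K" for y unfolding T_def using KA KAs that by blast
      have TT: "T (T y) = (1 + \<rho>) *\<^sub>R T y - \<rho> *\<^sub>R y" if "y \<in> K" for y
      proof -
        have "F [] y = 0" using that K_def by blast
        hence D0: "D y = 0" by (simp add: F_def)
        have "T (T y) - ((1 + \<rho>) *\<^sub>R T y - \<rho> *\<^sub>R y) = D y" unfolding D_def by (simp add: algebra_simps)
        thus ?thesis using D0 by simp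
      qed
      have op0: "orth_proj_on K P0" unfolding orth_proj_on_def
      proof (intro conjI ballI allI)
        fix x assume x: "x \<in> K"
        show "P0 x \<in> K" unfolding P0_def
          by (intro csubspace_scaleR[OF Ks] csubspace_diff[OF Ks] KT x)
        show "P0 (P0 x) = P0 x"
          apply (rule cinner_ext)
          apply (simp add: P0_def bcl_scaleR[OF T] bcl_diff[OF T] TT[OF x] cinner_simps)
          apply (rule disjI2)?
          using kc by algebra
      next
        fix x y show "P0 (x + y) = P0 x + P0 y" by (simp add: P0_def bcl_add[OF T] algebra_simps)
      next
        fix c x show "P0 (c *\<^sub>C x) = c *\<^sub>C P0 x"
          by (rule cinner_ext) (simp add: P0_def bcl_hom[OF T] cinner_simps algebra_simps)
      next
        fix x y show "cinner (P0 x) y = cinner x (P0 y)"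
          by (simp add: P0_def cinner_simps Tsa)
      qed
      have op1: "orth_proj_on K P1" unfolding orth_proj_on_def
      proof (intro conjI ballI allI)
        fix x assume x: "x \<in> K"
        show "P1 x \<in> K" unfolding P1_def
          by (intro csubspace_scaleR[OF Ks] csubspace_diff[OF Ks] KT x)
        show "P1 (P1 x) = P1 x"
          apply (rule cinner_ext)
          apply (simp add: P1_def bcl_scaleR[OF T] bcl_diff[OF T] TT[OF x] cinner_simps)
          apply (rule disjI2)?
          using kc by algebra
      next
        fix x y show "P1 (x + y) = P1 x + P1 y" by (simp add: P1_def bcl_add[OF T] algebra_simps)
      next
        fix c x show "P1 (c *\<^sub>C x) = c *\<^sub>C P1 x"
          by (rule cinner_ext) (simp add: P1_def bcl_hom[OF T] cinner_simps algebra_simps)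
      next
        fix x y show "cinner (P1 x) y = cinner x (P1 y)"
          by (simp add: P1_def cinner_simps Tsa)
      qed
      have sm: "\<forall>x\<in>K. P0 x + P1 x = x"
      proof
        fix x show "P0 x + P1 x = x"
          apply (rule cinner_ext)
          apply (simp add: P0_def P1_def cinner_simps)
          apply (rule disjI2)?
          using kc by algebra
      qed
      have inn: "\<forall>x\<in>K. \<forall>y\<in>K. cinner (A x) (A y) = cinner x (P0 y + complex_of_real (r\<^sup>2) *\<^sub>C P1 y)"
      proof (intro ballI)
        fix x y
        have "T y = P0 y + complex_of_real \<rho> *\<^sub>C P1 y"
          apply (rule cinner_ext)
          apply (simp add: P0_def P1_def cinner_simps)
          apply (rule disjI2)?
          using kc by algebra
        thus "cinner (A x) (A y) = cinner x (P0 y + complex_of_real (r\<^sup>2) *\<^sub>C P1 y)"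
          by (simp add: TA \<rho>_def)
      qed
      show ?thesis unfolding classC1r_on_def using op0 op1 sm inn by blast
    qed
    show ?thesis using assms(9) r c by blast
  qed
  have KH: "K = H1" using H1K KH1 by blast
  have BH1: "B x \<in> H1" if "x \<in> H1" for x
    using Kcomm[OF B AB BAs] that KH by blast
  have BsH1: "Bs x \<in> H1" if "x \<in> H1" for x
    using Kcomm[OF Bs BsA BsAs] that KH by blast
  have red1: "reduces B H1" unfolding reduces_def Bs_def[symmetric] using H1r(1) BH1 BsH1 by auto
  have red2: "reduces B H2" unfolding reduces_def Bs_def[symmetric] assms(10)
  proof (intro conjI)
    show "closed_csubspace (orthogonal_complement H1)" by (rule closed_csubspace_orth)
    show "B ` orthogonal_complement H1 \<subseteq> orthogonal_complement H1"
      unfolding orthogonal_complement_def using BsH1 by (auto simp: adjB2[symmetric])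
    show "Bs ` orthogonal_complement H1 \<subseteq> orthogonal_complement H1"
      unfolding orthogonal_complement_def using BH1 by (auto simp: adjB[symmetric])
  qed
  show ?thesis using red1 red2 by blast
qed

end
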